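(* Let $(A,* )$ be a finite-dimensional associative algebra, $(l,\rho,V)$ a finite-dimensional bimodule of $A$, and $T:V\to A$ an $\mathcal O$-operator associated to $(l,\rho,V)$. Let $T(V)\subset A$ carry the products $T(u)\succ T(v)=T(l(T(u))v)$, $T(u)\prec T(v)=T(\rho(T(v))u)$ ($u,v\in V$). Let $\mathcal D=T(V)\oplus V^*$ with products $$(x+a^* )\succ(y+b^* )=x\succ y+\rho^*(x)b^*,\qquad (x+a^* )\prec(y+b^* )=x\prec y+l^*(y)a^*$$ for $x,y\in T(V)$, $a^*,b^*\in V^*$. Then $\mathcal D$ is a dendriform algebra, and, with $\{v_1,\dots,v_m\}$ a basis of $V$ with dual basis $\{v_1^*,\dots,v_m^*\}$ and $T$ identified with $\sum_i T(v_i)\otimes v_i^*\in\mathcal D\otimes\mathcal D$, the element $r=T+\sigma(T)$ is a symmetric solution of the $D$-equation $r_{12}*r_{13}=r_{13}\prec r_{23}+r_{23}\succ r_{12}$ in $\mathcal D$ (where $*=\succ+\prec$ on $\mathcal D$).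
   Context: A bimodule of an associative algebra $(A,* )$ is a pair of linear maps $l,\rho:A\to\mathfrak{gl}(V)$ with $l(x*y)=l(x)l(y)$, $\rho(x*y)=\rho(y)\rho(x)$, $l(x)\rho(y)=\rho(y)l(x)$. For such maps, $l^*,\rho^*:A\to\mathfrak{gl}(V^* )$ are $\langle l^*(x)u^*,v\rangle=\langle u^*,l(x)v\rangle$, $\langle\rho^*(x)u^*,v\rangle=\langle u^*,\rho(x)v\rangle$ (here restricted to $T(V)$). An $\mathcal O$-operator associated to $(l,\rho,V)$ is a linear $T:V\to A$ with $T(u)*T(v)=T(l(T(u))v+\rho(T(v))u)$ for all $u,v\in V$. A dendriform algebra is a vector space with bilinear products $\prec,\succ$ such that, writing $x*y=x\prec y+x\succ y$: $(x\prec y)\prec z=x\prec(y*z)$, $(x\succ y)\prec z=x\succ(y\prec z)$, $x\succ(y\succ z)=(x*y)\succ z$. $\sigma(u\otimes v)=v\otimes u$. For $r=\sum_i x_i\otimes y_i$: $r_{12}*r_{13}=\sum_{i,j}x_i*x_j\otimes y_i\otimes y_j$, $r_{13}\prec r_{23}=\sum_{i,j}x_i\otimes x_j\otimes y_i\prec y_j$, $r_{23}\succ r_{12}=\sum_{i,j}x_j\otimes x_i\succ y_j\otimes y_i$. *)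

theory Defs
  imports Complex_Main "HOL-Library.Function_Algebras" "HOL-Library.Product_Plus"
begin

definition fd_vector_space :: "('k::field \<Rightarrow> 'b::ab_group_add \<Rightarrow> 'b) \<Rightarrow> bool" where
  "fd_vector_space s \<longleftrightarrow> vector_space s \<and> (\<exists>B. finite B \<and> module.span s B = UNIV)"

definition assoc_algebra :: "('k::field \<Rightarrow> 'a::ab_group_add \<Rightarrow> 'a) \<Rightarrow> ('a \<Rightarrow> 'a \<Rightarrow> 'a) \<Rightarrow> bool" where
  "assoc_algebra sA mult \<longleftrightarrow> vector_space sA \<and>
     (\<forall>x y z. mult (x + y) z = mult x z + mult y z) \<and>
     (\<forall>x y z. mult x (y + z) = mult x y + mult x z) \<and>
     (\<forall>c x y. mult (sA c x) y = sA c (mult x y)) \<and>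
     (\<forall>c x y. mult x (sA c y) = sA c (mult x y)) \<and>
     (\<forall>x y z. mult (mult x y) z = mult x (mult y z))"

definition linear_to_gl :: "('k::field \<Rightarrow> 'a::ab_group_add \<Rightarrow> 'a) \<Rightarrow> ('k \<Rightarrow> 'v::ab_group_add \<Rightarrow> 'v)
     \<Rightarrow> ('a \<Rightarrow> 'v \<Rightarrow> 'v) \<Rightarrow> bool" where
  "linear_to_gl sA sV l \<longleftrightarrow> (\<forall>x. Vector_Spaces.linear sV sV (l x)) \<and>
     (\<forall>x y v. l (x + y) v = l x v + l y v) \<and> (\<forall>c x v. l (sA c x) v = sV c (l x v))"

definition bimodule :: "('k::field \<Rightarrow> 'a::ab_group_add \<Rightarrow> 'a) \<Rightarrow> ('a \<Rightarrow> 'a \<Rightarrow> 'a)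
     \<Rightarrow> ('k \<Rightarrow> 'v::ab_group_add \<Rightarrow> 'v) \<Rightarrow> ('a \<Rightarrow> 'v \<Rightarrow> 'v) \<Rightarrow> ('a \<Rightarrow> 'v \<Rightarrow> 'v) \<Rightarrow> bool" where
  "bimodule sA mult sV l \<rho> \<longleftrightarrow> vector_space sV \<and> linear_to_gl sA sV l \<and> linear_to_gl sA sV \<rho> \<and>
     (\<forall>x y. l (mult x y) = l x \<circ> l y) \<and>
     (\<forall>x y. \<rho> (mult x y) = \<rho> y \<circ> \<rho> x) \<and>
     (\<forall>x y. l x \<circ> \<rho> y = \<rho> y \<circ> l x)"

definition O_operator :: "('k::field \<Rightarrow> 'a::ab_group_add \<Rightarrow> 'a) \<Rightarrow> ('a \<Rightarrow> 'a \<Rightarrow> 'a)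
     \<Rightarrow> ('k \<Rightarrow> 'v::ab_group_add \<Rightarrow> 'v) \<Rightarrow> ('a \<Rightarrow> 'v \<Rightarrow> 'v) \<Rightarrow> ('a \<Rightarrow> 'v \<Rightarrow> 'v) \<Rightarrow> ('v \<Rightarrow> 'a) \<Rightarrow> bool" where
  "O_operator sA mult sV l \<rho> T \<longleftrightarrow> Vector_Spaces.linear sV sA T \<and>
     (\<forall>u v. mult (T u) (T v) = T (l (T u) v + \<rho> (T v) u))"

definition dendriform_algebra :: "('k::field \<Rightarrow> 'd::ab_group_add \<Rightarrow> 'd) \<Rightarrow> 'd set
     \<Rightarrow> ('d \<Rightarrow> 'd \<Rightarrow> 'd) \<Rightarrow> ('d \<Rightarrow> 'd \<Rightarrow> 'd) \<Rightarrow> bool" where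
  "dendriform_algebra s S prec succ \<longleftrightarrow>
     0 \<in> S \<and> (\<forall>x\<in>S. \<forall>y\<in>S. x + y \<in> S) \<and> (\<forall>c. \<forall>x\<in>S. s c x \<in> S) \<and>
     (\<forall>x\<in>S. \<forall>y\<in>S. prec x y \<in> S \<and> succ x y \<in> S) \<and>
     (\<forall>x\<in>S. \<forall>y\<in>S. \<forall>z\<in>S.
        prec (x + y) z = prec x z + prec y z \<and> prec x (y + z) = prec x y + prec x z \<and>
        succ (x + y) z = succ x z + succ y z \<and> succ x (y + z) = succ x y + succ x z) \<and>
     (\<forall>c. \<forall>x\<in>S. \<forall>y\<in>S.
        prec (s c x) y = s c (prec x y) \<and> prec x (s c y) = s c (prec x y) \<and>
        succ (s c x) y = s c (succ x y) \<and> succ x (s c y) = s c (succ x y)) \<and>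
     (\<forall>x\<in>S. \<forall>y\<in>S. \<forall>z\<in>S.
        prec (prec x y) z = prec x (prec y z + succ y z) \<and>
        prec (succ x y) z = succ x (prec y z) \<and>
        succ x (succ y z) = succ (prec x y + succ x y) z)"

(* dendriform products on T(V): T(u) \<succ> T(v) = T(l(T u) v), T(u) \<prec> T(v) = T(\<rho>(T v) u) *)
definition TV_succ :: "('v \<Rightarrow> 'a) \<Rightarrow> ('a \<Rightarrow> 'v \<Rightarrow> 'v) \<Rightarrow> 'a \<Rightarrow> 'a \<Rightarrow> 'a" where
  "TV_succ T l x y = T (l x (SOME v. T v = y))"

definition TV_prec :: "('v \<Rightarrow> 'a) \<Rightarrow> ('a \<Rightarrow> 'v \<Rightarrow> 'v) \<Rightarrow> 'a \<Rightarrow> 'a \<Rightarrow> 'a" where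
  "TV_prec T \<rho> x y = T (\<rho> y (SOME u. T u = x))"

(* D = T(V) \<oplus> V^*, elements are pairs (x, a^st) with x \<in> T(V) and a^st a linear functional on V *)
definition D_carrier :: "('k::field \<Rightarrow> 'v::ab_group_add \<Rightarrow> 'v) \<Rightarrow> ('v \<Rightarrow> 'a) \<Rightarrow> ('a \<times> ('v \<Rightarrow> 'k)) set" where
  "D_carrier sV T = {(x, f). x \<in> range T \<and> Vector_Spaces.linear sV ((*)) f}"

definition D_scale :: "('k::field \<Rightarrow> 'a \<Rightarrow> 'a) \<Rightarrow> 'k \<Rightarrow> 'a \<times> ('v \<Rightarrow> 'k) \<Rightarrow> 'a \<times> ('v \<Rightarrow> 'k)" where
  "D_scale sA c p = (sA c (fst p), \<lambda>v. c * snd p v)"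

(* (x + a^st) \<succ> (y + b^st) = x \<succ> y + \<rho>*(x) b^st,  with \<langle>\<rho>*(x) b^st, v\<rangle> = \<langle>b^st, \<rho>(x) v\<rangle> *)
definition D_succ :: "('v \<Rightarrow> 'a) \<Rightarrow> ('a \<Rightarrow> 'v \<Rightarrow> 'v) \<Rightarrow> ('a \<Rightarrow> 'v \<Rightarrow> 'v)
     \<Rightarrow> 'a \<times> ('v \<Rightarrow> 'k) \<Rightarrow> 'a \<times> ('v \<Rightarrow> 'k) \<Rightarrow> 'a \<times> ('v \<Rightarrow> 'k)" where
  "D_succ T l \<rho> p q = (TV_succ T l (fst p) (fst q), \<lambda>v. snd q (\<rho> (fst p) v))"

(* (x + a^st) \<prec> (y + b^st) = x \<prec> y + l*(y) a^st,  with \<langle>l*(y) a^st, v\<rangle> = \<langle>a^st, l(y) v\<rangle> *)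
definition D_prec :: "('v \<Rightarrow> 'a) \<Rightarrow> ('a \<Rightarrow> 'v \<Rightarrow> 'v) \<Rightarrow> ('a \<Rightarrow> 'v \<Rightarrow> 'v)
     \<Rightarrow> 'a \<times> ('v \<Rightarrow> 'k) \<Rightarrow> 'a \<times> ('v \<Rightarrow> 'k) \<Rightarrow> 'a \<times> ('v \<Rightarrow> 'k)" where
  "D_prec T l \<rho> p q = (TV_prec T \<rho> (fst p) (fst q), \<lambda>v. snd p (l (fst q) v))"

definition lin_functional_on :: "('k::field \<Rightarrow> 'd::ab_group_add \<Rightarrow> 'd) \<Rightarrow> 'd set \<Rightarrow> ('d \<Rightarrow> 'k) \<Rightarrow> bool" where
  "lin_functional_on s S \<phi> \<longleftrightarrow> (\<forall>x\<in>S. \<forall>y\<in>S. \<phi> (x + y) = \<phi> x + \<phi> y) \<and> (\<forall>c. \<forall>x\<in>S. \<phi> (s c x) = c * \<phi> x)"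

(* Tensors in S \<otimes> S (resp. S \<otimes> S \<otimes> S) are given as finite lists of elementary tensors.
   Equality of tensors (S finite-dimensional) is tested by pairing with all triples of
   linear functionals on S. *)
definition tensor2_eq :: "('k::field \<Rightarrow> 'd::ab_group_add \<Rightarrow> 'd) \<Rightarrow> 'd set \<Rightarrow> ('d \<times> 'd) list \<Rightarrow> ('d \<times> 'd) list \<Rightarrow> bool" where
  "tensor2_eq s S r r' \<longleftrightarrow> (\<forall>\<phi>1 \<phi>2. lin_functional_on s S \<phi>1 \<longrightarrow> lin_functional_on s S \<phi>2 \<longrightarrow>
     (\<Sum>(x, y)\<leftarrow>r. \<phi>1 x * \<phi>2 y) = (\<Sum>(x, y)\<leftarrow>r'. \<phi>1 x * \<phi>2 y))"

definition tensor3_eq :: "('k::field \<Rightarrow> 'd::ab_group_add \<Rightarrow> 'd) \<Rightarrow> 'd set \<Rightarrow> ('d \<times> 'd \<times> 'd) list \<Rightarrow> ('d \<times> 'd \<times> 'd) list \<Rightarrow> bool" where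
  "tensor3_eq s S t t' \<longleftrightarrow> (\<forall>\<phi>1 \<phi>2 \<phi>3. lin_functional_on s S \<phi>1 \<longrightarrow> lin_functional_on s S \<phi>2 \<longrightarrow>
     lin_functional_on s S \<phi>3 \<longrightarrow>
     (\<Sum>(x, y, z)\<leftarrow>t. \<phi>1 x * \<phi>2 y * \<phi>3 z) = (\<Sum>(x, y, z)\<leftarrow>t'. \<phi>1 x * \<phi>2 y * \<phi>3 z))"

definition flip2 :: "('d \<times> 'd) list \<Rightarrow> ('d \<times> 'd) list" where
  "flip2 r = map (\<lambda>(x, y). (y, x)) r"

(* r = \<Sum>_i x_i \<otimes> y_i;  r12 * r13 = \<Sum>_{i,j} x_i * x_j \<otimes> y_i \<otimes> y_j *)
definition r12_r13 :: "('d \<Rightarrow> 'd \<Rightarrow> 'd) \<Rightarrow> ('d \<times> 'd) list \<Rightarrow> ('d \<times> 'd \<times> 'd) list" where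
  "r12_r13 m r = [(m xi xj, yi, yj). (xi, yi) \<leftarrow> r, (xj, yj) \<leftarrow> r]"

(* r13 \<prec> r23 = \<Sum>_{i,j} x_i \<otimes> x_j \<otimes> y_i \<prec> y_j *)
definition r13_r23 :: "('d \<Rightarrow> 'd \<Rightarrow> 'd) \<Rightarrow> ('d \<times> 'd) list \<Rightarrow> ('d \<times> 'd \<times> 'd) list" where
  "r13_r23 pr r = [(xi, xj, pr yi yj). (xi, yi) \<leftarrow> r, (xj, yj) \<leftarrow> r]"

(* r23 \<succ> r12 = \<Sum>_{i,j} x_j \<otimes> x_i \<succ> y_j \<otimes> y_i *)
definition r23_r12 :: "('d \<Rightarrow> 'd \<Rightarrow> 'd) \<Rightarrow> ('d \<times> 'd) list \<Rightarrow> ('d \<times> 'd \<times> 'd) list" where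
  "r23_r12 su r = [(xj, su xi yj, yi). (xi, yi) \<leftarrow> r, (xj, yj) \<leftarrow> r]"

definition D_equation :: "('k::field \<Rightarrow> 'd::ab_group_add \<Rightarrow> 'd) \<Rightarrow> 'd set
     \<Rightarrow> ('d \<Rightarrow> 'd \<Rightarrow> 'd) \<Rightarrow> ('d \<Rightarrow> 'd \<Rightarrow> 'd) \<Rightarrow> ('d \<times> 'd) list \<Rightarrow> bool" where
  "D_equation s S pr su r \<longleftrightarrow>
     tensor3_eq s S (r12_r13 (\<lambda>x y. pr x y + su x y) r) (r13_r23 pr r @ r23_r12 su r)"

end

theory Submission
  imports Defs
begin


lemma vs_field: "vector_space ((*) :: 'k::field \<Rightarrow> 'k \<Rightarrow> 'k)"
  by (unfold_locales) (auto simp: algebra_simps)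

locale DS =
  fixes sA :: "'k::field \<Rightarrow> 'a::ab_group_add \<Rightarrow> 'a"
    and mult :: "'a \<Rightarrow> 'a \<Rightarrow> 'a"
    and sV :: "'k \<Rightarrow> 'v::ab_group_add \<Rightarrow> 'v"
    and l \<rho> :: "'a \<Rightarrow> 'v \<Rightarrow> 'v"
    and T :: "'v \<Rightarrow> 'a"
    and m :: nat
    and v :: "nat \<Rightarrow> 'v"
    and vd :: "nat \<Rightarrow> 'v \<Rightarrow> 'k"
  assumes alg: "assoc_algebra sA mult"
    and bimod: "bimodule sA mult sV l \<rho>"
    and Oop: "O_operator sA mult sV l \<rho> T"
    and basis_inj: "inj_on v {..<m}"
    and basis_span: "module.span sV (v ` {..<m}) = UNIV"
    and dual_lin: "\<And>i. i < m \<Longrightarrow> Vector_Spaces.linear sV ((*)) (vd i)"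
    and dual_basis: "\<And>i j. i < m \<Longrightarrow> j < m \<Longrightarrow> vd i (v j) = (if i = j then 1 else 0)"
begin

abbreviation lin :: "('v \<Rightarrow> 'k) \<Rightarrow> bool" where "lin g \<equiv> Vector_Spaces.linear sV ((*)) g"

lemma vsV: "vector_space sV" using bimod by (simp add: bimodule_def)
lemma vsA: "vector_space sA" using alg by (simp add: assoc_algebra_def)
lemma modV: "module sV" using vsV by (simp add: module_iff_vector_space)
lemma modA: "module sA" using vsA by (simp add: module_iff_vector_space)

lemma sA_zero[simp]: "sA c 0 = 0" using module.scale_zero_right[OF modA] .
lemma sV_zero[simp]: "sV c 0 = 0" using module.scale_zero_right[OF modV] .

lemma T_lin: "Vector_Spaces.linear sV sA T" using Oop O_operator_def by blast
lemma T_add: "T (a + b) = T a + T b" and T_scale: "T (sV c a) = sA c (T a)"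
  using T_lin by (auto simp: Vector_Spaces.linear_iff)
lemma T_zero[simp]: "T 0 = 0" using T_add[of 0 0] by simp
lemma T_diff: "T (a - b) = T a - T b" by (metis T_add diff_add_cancel eq_diff_eq)

lemma l_lin: "Vector_Spaces.linear sV sV (l x)" and r_lin: "Vector_Spaces.linear sV sV (\<rho> x)"
  using bimod by (auto simp: bimodule_def linear_to_gl_def)
lemma l_add2: "l x (a + b) = l x a + l x b" and l_sc2: "l x (sV c a) = sV c (l x a)"
  using l_lin[of x] by (auto simp: Vector_Spaces.linear_iff)
lemma r_add2: "\<rho> x (a + b) = \<rho> x a + \<rho> x b" and r_sc2: "\<rho> x (sV c a) = sV c (\<rho> x a)"
  using r_lin[of x] by (auto simp: Vector_Spaces.linear_iff)
lemma l_add1: "l (x + y) a = l x a + l y a" and l_sc1: "l (sA c x) a = sV c (l x a)"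
  and r_add1: "\<rho> (x + y) a = \<rho> x a + \<rho> y a" and r_sc1: "\<rho> (sA c x) a = sV c (\<rho> x a)"
  using bimod by (auto simp: bimodule_def linear_to_gl_def)
lemma l_zero1[simp]: "l 0 a = 0" using l_add1[of 0 0 a] by simp
lemma r_zero1[simp]: "\<rho> 0 a = 0" using r_add1[of 0 0 a] by simp
lemma l_zero2[simp]: "l x 0 = 0" using l_add2[of x 0 0] by simp
lemma r_zero2[simp]: "\<rho> x 0 = 0" using r_add2[of x 0 0] by simp
lemma l_diff2: "l x (a - b) = l x a - l x b" by (metis l_add2 diff_add_cancel eq_diff_eq)
lemma r_diff2: "\<rho> x (a - b) = \<rho> x a - \<rho> x b" by (metis r_add2 diff_add_cancel eq_diff_eq)
lemma l_mult: "l (mult x y) a = l x (l y a)"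
  using bimod unfolding bimodule_def by (metis comp_apply)
lemma r_mult: "\<rho> (mult x y) a = \<rho> y (\<rho> x a)"
  using bimod unfolding bimodule_def by (metis comp_apply)
lemma lr_comm: "l x (\<rho> y a) = \<rho> y (l x a)"
  using bimod unfolding bimodule_def by (metis comp_apply)
lemma mult_add1: "mult (x + y) z = mult x z + mult y z"
  and mult_add2: "mult x (y + z) = mult x y + mult x z"
  using alg by (auto simp: assoc_algebra_def)
lemma mult_zero1[simp]: "mult 0 y = 0" using mult_add1[of 0 0 y] by simp
lemma mult_zero2[simp]: "mult x 0 = 0" using mult_add2[of x 0 0] by simp
lemma Oeq: "mult (T u) (T w) = T (l (T u) w + \<rho> (T w) u)"
  using Oop by (simp add: O_operator_def)

lemma ker_l: "T w = 0 \<Longrightarrow> T (l (T u) w) = 0"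
  using Oeq[of u w] by simp
lemma ker_r: "T u = 0 \<Longrightarrow> T (\<rho> (T w) u) = 0"
  using Oeq[of u w] by simp

lemma W_succ: "T w = y \<Longrightarrow> TV_succ T l (T u) y = T (l (T u) w)"
proof -
  assume h: "T w = y"
  let ?w = "SOME w. T w = y"
  have "T ?w = y" using h by (rule someI)
  hence "T (?w - w) = 0" using h by (simp add: T_diff)
  hence "T (l (T u) (?w - w)) = 0" by (rule ker_l)
  thus ?thesis by (simp add: TV_succ_def l_diff2 T_diff)
qed

lemma W_prec: "T u = x \<Longrightarrow> TV_prec T \<rho> x (T w) = T (\<rho> (T w) u)"
proof -
  assume h: "T u = x"
  let ?u = "SOME u. T u = x"
  have "T ?u = x" using h by (rule someI)
  hence "T (?u - u) = 0" using h by (simp add: T_diff)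
  hence "T (\<rho> (T w) (?u - u)) = 0" by (rule ker_r)
  thus ?thesis by (simp add: TV_prec_def r_diff2 T_diff)
qed

lemma prec_TT: "D_prec T l \<rho> (T u, f) (T w, g) = (T (\<rho> (T w) u), \<lambda>z. f (l (T w) z))"
  by (simp add: D_prec_def W_prec)
lemma succ_TT: "D_succ T l \<rho> (T u, f) (T w, g) = (T (l (T u) w), \<lambda>z. g (\<rho> (T u) z))"
  by (simp add: D_succ_def W_succ)

lemma lin_iff': "lin g \<longleftrightarrow> (\<forall>x y. g (x + y) = g x + g y) \<and> (\<forall>c x. g (sV c x) = c * g x)"
  using vsV vs_field[where 'k='k] by (auto simp: Vector_Spaces.linear_iff)
lemma lin_add: "lin g \<Longrightarrow> g (x + y) = g x + g y" by (simp add: lin_iff')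
lemma lin_sc: "lin g \<Longrightarrow> g (sV c x) = c * g x" by (simp add: lin_iff')
lemma lin_zero: "lin g \<Longrightarrow> g 0 = 0" using lin_sc[of g 0 0] by simp

lemma mem_S: "p \<in> D_carrier sV T \<longleftrightarrow> (\<exists>u. fst p = T u) \<and> lin (snd p)"
  by (cases p) (auto simp: D_carrier_def)

lemma pair_add: "(T a, f) + (T b, g) = (T (a + b), f + g)" by (simp add: T_add)
lemma pair_sc: "D_scale sA c (T a, f) = (T (sV c a), \<lambda>z. c * f z)" by (simp add: D_scale_def T_scale)
lemma l_T_add: "l (T (a + b)) z = l (T a) z + l (T b) z" by (simp add: T_add l_add1)
lemma r_T_add: "\<rho> (T (a + b)) z = \<rho> (T a) z + \<rho> (T b) z" by (simp add: T_add r_add1)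
lemma l_T_sc: "l (T (sV c a)) z = sV c (l (T a) z)" by (simp add: T_scale l_sc1)
lemma r_T_sc: "\<rho> (T (sV c a)) z = sV c (\<rho> (T a) z)" by (simp add: T_scale r_sc1)
lemma l_Tm: "l (T (\<rho> (T w) u + l (T u) w)) z = l (T u) (l (T w) z)"
  by (metis Oeq add.commute l_mult)
lemma r_Tm: "\<rho> (T (\<rho> (T w) u + l (T u) w)) z = \<rho> (T w) (\<rho> (T u) z)"
  by (metis Oeq add.commute r_mult)

lemma memE: assumes "p \<in> D_carrier sV T" obtains u f where "p = (T u, f)" "lin f"
  using assms by (cases p) (auto simp: D_carrier_def)
lemma memI[simp]: "(T u, f) \<in> D_carrier sV T \<longleftrightarrow> lin f"
  by (auto simp: D_carrier_def)

lemma lin_plus: "lin f \<Longrightarrow> lin g \<Longrightarrow> lin (f + g)" by (simp add: lin_iff' algebra_simps)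
lemma lin_cmul: "lin f \<Longrightarrow> lin (\<lambda>z. c * f z)" by (simp add: lin_iff' algebra_simps)
lemma lin_0: "lin 0" by (simp add: lin_iff')
lemma lin_compl: "lin f \<Longrightarrow> lin (\<lambda>z. f (l x z))" by (simp add: lin_iff' l_add2 l_sc2)
lemma lin_compr: "lin f \<Longrightarrow> lin (\<lambda>z. f (\<rho> x z))" by (simp add: lin_iff' r_add2 r_sc2)

lemma dend: "dendriform_algebra (D_scale sA) (D_carrier sV T) (D_prec T l \<rho>) (D_succ T l \<rho>)"
  unfolding dendriform_algebra_def
  apply (intro conjI ballI allI)
  apply (auto elim!: memE simp: T_add[symmetric] D_scale_def T_scale[symmetric] prec_TT succ_TT l_T_sc r_T_sc l_sc2 r_sc2 lin_sc l_Tm r_Tm lr_comm fun_eq_iff lin_plus lin_cmul lin_compl lin_compr lin_add l_add2 r_add2 lin_0)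
  using memI[of 0 0] apply (simp add: lin_0 zero_prod_def)
  apply (auto simp: l_T_add r_T_add lin_add)
  done



end


context DS begin
abbreviation lf :: "('a \<times> ('v \<Rightarrow> 'k) \<Rightarrow> 'k) \<Rightarrow> bool" where
  "lf \<phi> \<equiv> lin_functional_on (D_scale sA) (D_carrier sV T) \<phi>"

lemma memI0[simp]: "(0, f) \<in> D_carrier sV T \<longleftrightarrow> lin f"
  using memI[of 0 f] by simp

lemma phi_add: "lf \<phi> \<Longrightarrow> p \<in> D_carrier sV T \<Longrightarrow> q \<in> D_carrier sV T \<Longrightarrow> \<phi> (p + q) = \<phi> p + \<phi> q"
  by (simp add: lin_functional_on_def)
lemma phi_sc: "lf \<phi> \<Longrightarrow> p \<in> D_carrier sV T \<Longrightarrow> \<phi> (D_scale sA c p) = c * \<phi> p"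
  by (simp add: lin_functional_on_def)
lemma phi_0: "lf \<phi> \<Longrightarrow> \<phi> 0 = 0"
  using phi_sc[of \<phi> "(0,0)" 0] lin_0 by (simp add: zero_prod_def D_scale_def zero_fun_def)
lemma al_add: "lf \<phi> \<Longrightarrow> \<phi> (T (a + b), 0) = \<phi> (T a, 0) + \<phi> (T b, 0)"
  using phi_add[of \<phi> "(T a, 0)" "(T b, 0)"] lin_0 by (simp add: T_add)
lemma al_sc: "lf \<phi> \<Longrightarrow> \<phi> (T (sV c a), 0) = c * \<phi> (T a, 0)"
  using phi_sc[of \<phi> "(T a, 0)" c] lin_0 by (simp add: D_scale_def T_scale zero_fun_def)
lemma lin_al: "lf \<phi> \<Longrightarrow> lin (\<lambda>u. \<phi> (T u, 0))"
  by (simp add: lin_iff' al_add al_sc)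

lemma lin_comp: "lin f \<Longrightarrow> Vector_Spaces.linear sV sV h \<Longrightarrow> lin (\<lambda>z. f (h z))"
  by (simp add: lin_iff' Vector_Spaces.linear_iff)


end


context DS begin

lemma be_sum: "lf \<phi> \<Longrightarrow> (\<And>i. i < (n::nat) \<Longrightarrow> lin (g i)) \<Longrightarrow>
   lin (\<lambda>z. \<Sum>i<n. c i * g i z) \<and> \<phi> (0, \<lambda>z. \<Sum>i<n. c i * g i z) = (\<Sum>i<n. c i * \<phi> (0, g i))"
proof (induction n)
  case 0
  then show ?case using phi_0[of \<phi>] lin_0 by (simp add: zero_prod_def zero_fun_def)
next
  case (Suc n)
  have IH: "lin (\<lambda>z. \<Sum>i<n. c i * g i z)" "\<phi> (0, \<lambda>z. \<Sum>i<n. c i * g i z) = (\<Sum>i<n. c i * \<phi> (0, g i))"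
    using Suc by auto
  have gn: "lin (g n)" using Suc by auto
  have lfp: "lf \<phi>" using Suc.prems(1) .
  have eq: "(0::'a, \<lambda>z. \<Sum>i<Suc n. c i * g i z) = (0, \<lambda>z. \<Sum>i<n. c i * g i z) + D_scale sA (c n) (0, g n)"
    by (simp add: D_scale_def plus_fun_def)
  have l2: "lin (\<lambda>z. \<Sum>i<Suc n. c i * g i z)"
  proof -
    have "(\<lambda>z. \<Sum>i<Suc n. c i * g i z) = (\<lambda>z. \<Sum>i<n. c i * g i z) + (\<lambda>z. c n * g n z)"
      by (simp add: plus_fun_def)
    then show ?thesis using lin_plus[OF IH(1) lin_cmul[OF gn]] by simp
  qed
  have "\<phi> (0, \<lambda>z. \<Sum>i<Suc n. c i * g i z) = \<phi> (0, \<lambda>z. \<Sum>i<n. c i * g i z) + \<phi> (D_scale sA (c n) (0, g n))"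
    unfolding eq using Suc.prems IH gn
    by (intro phi_add[OF lfp]) (auto simp: D_scale_def lin_cmul IH)
  also have "\<dots> = (\<Sum>i<n. c i * \<phi> (0, g i)) + c n * \<phi> (0, g n)"
    using IH gn phi_sc[OF lfp, of "(0, g n)" "c n"] by simp
  finally show ?case using l2 by simp
qed

lemma lin_sum: "lin g \<Longrightarrow> g (\<Sum>i\<in>A. sV (c i) (w i)) = (\<Sum>i\<in>A. c i * g (w i))"
  by (induction A rule: infinite_finite_induct) (auto simp: lin_add lin_sc lin_zero)

lemma expand: "u = (\<Sum>i<m. sV (vd i u) (v i))"
proof -
  have "u \<in> module.span sV (v ` {..<m})" using basis_span by simp
  then obtain c where c: "u = (\<Sum>w\<in>v ` {..<m}. sV (c w) w)"
    using module.span_finite[OF modV, of "v ` {..<m}"] by auto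
  hence c2: "u = (\<Sum>i<m. sV (c (v i)) (v i))"
    by (simp add: sum.reindex[OF basis_inj])
  have "vd j u = c (v j)" if "j < m" for j
  proof -
    have "vd j u = (\<Sum>i<m. c (v i) * vd j (v i))"
      using lin_sum[OF dual_lin[OF that]] c2 by metis
    also have "\<dots> = (\<Sum>i<m. if i = j then c (v j) else 0)"
      using that by (intro sum.cong) (auto simp: dual_basis)
    also have "\<dots> = c (v j)" using that by simp
    finally show ?thesis .
  qed
  then have "(\<Sum>i<m. sV (vd i u) (v i)) = (\<Sum>i<m. sV (c (v i)) (v i))" by simp
  then show ?thesis using c2 by metis
qed

lemma expand_lin: "lin a \<Longrightarrow> a u = (\<Sum>i<m. vd i u * a (v i))"
proof -
  assume h: "lin a"
  have "a u = a (\<Sum>i<m. sV (vd i u) (v i))" using expand[of u] by (rule arg_cong)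
  also have "\<dots> = (\<Sum>i<m. vd i u * a (v i))" using lin_sum[OF h] .
  finally show ?thesis .
qed

end


context DS begin

lemma K1: "lf \<phi> \<Longrightarrow> lin g \<Longrightarrow> (\<Sum>i<m. g (v i) * \<phi> (0, vd i)) = \<phi> (0, g)"
proof -
  assume h: "lf \<phi>" "lin g"
  have eq: "g = (\<lambda>z. \<Sum>i<m. g (v i) * vd i z)"
    by (rule ext, subst expand_lin[OF h(2)], simp add: mult.commute)
  have "\<phi> (0, \<lambda>z. \<Sum>i<m. g (v i) * vd i z) = (\<Sum>i<m. g (v i) * \<phi> (0, vd i))"
    using be_sum[OF h(1), of m vd "\<lambda>i. g (v i)"] dual_lin by auto
  then show ?thesis unfolding eq[symmetric] by (rule sym)
qed

lemma K3: "lf \<phi> \<Longrightarrow> lin a \<Longrightarrow> Vector_Spaces.linear sV sV h \<Longrightarrow>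
   (\<Sum>i<m. a (v i) * \<phi> (0, \<lambda>z. vd i (h z))) = \<phi> (0, \<lambda>z. a (h z))"
proof -
  assume h: "lf \<phi>" "lin a" "Vector_Spaces.linear sV sV h"
  have eq: "(\<lambda>z. a (h z)) = (\<lambda>z. \<Sum>i<m. a (v i) * vd i (h z))"
    by (rule ext, subst expand_lin[OF h(2)], simp add: mult.commute)
  have "\<phi> (0, \<lambda>z. \<Sum>i<m. a (v i) * vd i (h z)) = (\<Sum>i<m. a (v i) * \<phi> (0, \<lambda>z. vd i (h z)))"
    using be_sum[OF h(1), of m "\<lambda>i z. vd i (h z)" "\<lambda>i. a (v i)"] dual_lin lin_comp[OF _ h(3)] by auto
  then show ?thesis unfolding eq[symmetric] by (rule sym)
qed

end


context DS begin
lemma eeP: "D_prec T l \<rho> (T a, 0) (T b, 0) = (T (\<rho> (T b) a), 0)"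
  by (simp add: prec_TT zero_fun_def)
lemma eeS: "D_succ T l \<rho> (T a, 0) (T b, 0) = (T (l (T a) b), 0)"
  by (simp add: succ_TT zero_fun_def)
lemma efP: "D_prec T l \<rho> (T a, 0) (0, g) = 0"
  by (simp add: D_prec_def TV_prec_def zero_prod_def zero_fun_def)
lemma efS: "D_succ T l \<rho> (T a, 0) (0, g) = (0, \<lambda>z. g (\<rho> (T a) z))"
  using W_succ[of 0 0 a] by (simp add: D_succ_def)
lemma feP: "D_prec T l \<rho> (0, f) (T b, 0) = (0, \<lambda>z. f (l (T b) z))"
  using W_prec[of 0 0 b] by (simp add: D_prec_def)
lemma feS: "D_succ T l \<rho> (0, f) (T b, 0) = 0"
  by (simp add: D_succ_def TV_succ_def zero_prod_def zero_fun_def)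
lemma ffP: "lin f \<Longrightarrow> D_prec T l \<rho> (0, f) (0, g) = 0"
  by (simp add: D_prec_def TV_prec_def zero_prod_def zero_fun_def lin_zero)
lemma ffS: "lin g \<Longrightarrow> D_succ T l \<rho> (0, f) (0, g) = 0"
  by (simp add: D_succ_def TV_succ_def zero_prod_def zero_fun_def lin_zero)

end



lemma LS1: "sum_list (map G (concat (map (\<lambda>i. [p i, q i]) [0..<n]))) = (\<Sum>i<n. G (p i) + G (q i))"
  by (induction n) auto

lemma LS2: "sum_list (map G (concat (map (\<lambda>(xi, yi). map (\<lambda>(xj, yj). Q xi yi xj yj) R2) R1)))
   = sum_list (map (\<lambda>(xi, yi). sum_list (map (\<lambda>(xj, yj). G (Q xi yi xj yj)) R2)) R1)"
  by (induction R1) (auto simp: comp_def case_prod_beta)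

lemma R1: "(\<Sum>j\<in>A. X j * c * Y j) = c * (\<Sum>j\<in>A. X j * Y j)" for c :: "'k::field"
  by (simp add: sum_distrib_left ac_simps)
lemma R2: "(\<Sum>j\<in>A. X j * Y j * c) = c * (\<Sum>j\<in>A. X j * Y j)" for c :: "'k::field"
  by (simp add: sum_distrib_left ac_simps)
lemma R3: "(\<Sum>j\<in>A. X j * c * Y j) = c * (\<Sum>j\<in>A. Y j * X j)" for c :: "'k::field"
  by (simp add: sum_distrib_left ac_simps)
lemma R4: "(\<Sum>j\<in>A. X j * Y j * c) = c * (\<Sum>j\<in>A. Y j * X j)" for c :: "'k::field"
  by (simp add: sum_distrib_left ac_simps)

context DS begin

lemma Deq: "D_equation (D_scale sA) (D_carrier sV T) (D_prec T l \<rho>) (D_succ T l \<rho>)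
   (concat (map (\<lambda>i. [((T (v i), 0), (0, vd i)), ((0, vd i), (T (v i), 0))]) [0..<m]))"
  unfolding D_equation_def tensor3_eq_def
proof (intro allI impI)
  fix \<phi>1 \<phi>2 \<phi>3 assume h1: "lf \<phi>1" and h2: "lf \<phi>2" and h3: "lf \<phi>3"
  have M1: "(\<Sum>i<m. \<Sum>j<m. \<phi>1 (T (l (T (v i)) (v j)), 0) * \<phi>2 (0, vd i) * \<phi>3 (0, vd j))
     = (\<Sum>i<m. \<Sum>j<m. \<phi>1 (T (v i), 0) * \<phi>2 (0, vd j) * \<phi>3 (0, \<lambda>z. vd i (l (T (v j)) z)))"
  proof -
    have "(\<Sum>i<m. \<Sum>j<m. \<phi>1 (T (l (T (v i)) (v j)), 0) * \<phi>2 (0, vd i) * \<phi>3 (0, vd j))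
       = (\<Sum>i<m. \<phi>2 (0, vd i) * \<phi>3 (0, \<lambda>z. \<phi>1 (T (l (T (v i)) z), 0)))"
    proof (rule sum.cong[OF refl])
      fix i show "(\<Sum>j<m. \<phi>1 (T (l (T (v i)) (v j)), 0) * \<phi>2 (0, vd i) * \<phi>3 (0, vd j))
         = \<phi>2 (0, vd i) * \<phi>3 (0, \<lambda>z. \<phi>1 (T (l (T (v i)) z), 0))"
        unfolding R1 using K1[OF h3 lin_compl[OF lin_al[OF h1], of "T (v i)"]] by simp
    qed
    also have "\<dots> = (\<Sum>j<m. \<Sum>i<m. \<phi>1 (T (v i), 0) * \<phi>2 (0, vd j) * \<phi>3 (0, \<lambda>z. vd i (l (T (v j)) z)))"
    proof (rule sum.cong[OF refl])
      fix j show "\<phi>2 (0, vd j) * \<phi>3 (0, \<lambda>z. \<phi>1 (T (l (T (v j)) z), 0))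
         = (\<Sum>i<m. \<phi>1 (T (v i), 0) * \<phi>2 (0, vd j) * \<phi>3 (0, \<lambda>z. vd i (l (T (v j)) z)))"
        unfolding R1 using K3[OF h3 lin_al[OF h1] l_lin[of "T (v j)"]] by simp
    qed
    also have "\<dots> = (\<Sum>i<m. \<Sum>j<m. \<phi>1 (T (v i), 0) * \<phi>2 (0, vd j) * \<phi>3 (0, \<lambda>z. vd i (l (T (v j)) z)))"
      by (rule sum.swap)
    finally show ?thesis .
  qed
  have M2: "(\<Sum>i<m. \<Sum>j<m. \<phi>1 (T (\<rho> (T (v j)) (v i)), 0) * \<phi>2 (0, vd i) * \<phi>3 (0, vd j))
     = (\<Sum>i<m. \<Sum>j<m. \<phi>1 (T (v j), 0) * \<phi>2 (0, \<lambda>z. vd j (\<rho> (T (v i)) z)) * \<phi>3 (0, vd i))"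
  proof -
    have "(\<Sum>i<m. \<Sum>j<m. \<phi>1 (T (\<rho> (T (v j)) (v i)), 0) * \<phi>2 (0, vd i) * \<phi>3 (0, vd j))
       = (\<Sum>j<m. \<Sum>i<m. \<phi>1 (T (\<rho> (T (v j)) (v i)), 0) * \<phi>2 (0, vd i) * \<phi>3 (0, vd j))"
      by (rule sum.swap)
    also have "\<dots> = (\<Sum>j<m. \<phi>3 (0, vd j) * \<phi>2 (0, \<lambda>z. \<phi>1 (T (\<rho> (T (v j)) z), 0)))"
    proof (rule sum.cong[OF refl])
      fix j show "(\<Sum>i<m. \<phi>1 (T (\<rho> (T (v j)) (v i)), 0) * \<phi>2 (0, vd i) * \<phi>3 (0, vd j))
         = \<phi>3 (0, vd j) * \<phi>2 (0, \<lambda>z. \<phi>1 (T (\<rho> (T (v j)) z), 0))"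
        unfolding R2 using K1[OF h2 lin_compr[OF lin_al[OF h1], of "T (v j)"]] by simp
    qed
    also have "\<dots> = (\<Sum>i<m. \<Sum>j<m. \<phi>1 (T (v j), 0) * \<phi>2 (0, \<lambda>z. vd j (\<rho> (T (v i)) z)) * \<phi>3 (0, vd i))"
    proof (rule sum.cong[OF refl])
      fix i show "\<phi>3 (0, vd i) * \<phi>2 (0, \<lambda>z. \<phi>1 (T (\<rho> (T (v i)) z), 0))
         = (\<Sum>j<m. \<phi>1 (T (v j), 0) * \<phi>2 (0, \<lambda>z. vd j (\<rho> (T (v i)) z)) * \<phi>3 (0, vd i))"
        unfolding R2 using K3[OF h2 lin_al[OF h1] r_lin[of "T (v i)"]] by simp
    qed
    finally show ?thesis .
  qed
  have M3: "(\<Sum>i<m. \<Sum>j<m. \<phi>1 (0, \<lambda>z. vd j (\<rho> (T (v i)) z)) * \<phi>2 (0, vd i) * \<phi>3 (T (v j), 0))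
     = (\<Sum>i<m. \<Sum>j<m. \<phi>1 (0, vd i) * \<phi>2 (0, vd j) * \<phi>3 (T (\<rho> (T (v j)) (v i)), 0))"
  proof -
    have "(\<Sum>i<m. \<Sum>j<m. \<phi>1 (0, \<lambda>z. vd j (\<rho> (T (v i)) z)) * \<phi>2 (0, vd i) * \<phi>3 (T (v j), 0))
       = (\<Sum>i<m. \<phi>2 (0, vd i) * \<phi>1 (0, \<lambda>z. \<phi>3 (T (\<rho> (T (v i)) z), 0)))"
    proof (rule sum.cong[OF refl])
      fix i show "(\<Sum>j<m. \<phi>1 (0, \<lambda>z. vd j (\<rho> (T (v i)) z)) * \<phi>2 (0, vd i) * \<phi>3 (T (v j), 0))
         = \<phi>2 (0, vd i) * \<phi>1 (0, \<lambda>z. \<phi>3 (T (\<rho> (T (v i)) z), 0))"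
        unfolding R3 using K3[OF h1 lin_al[OF h3] r_lin[of "T (v i)"]] by simp
    qed
    also have "\<dots> = (\<Sum>j<m. \<Sum>i<m. \<phi>1 (0, vd i) * \<phi>2 (0, vd j) * \<phi>3 (T (\<rho> (T (v j)) (v i)), 0))"
    proof (rule sum.cong[OF refl])
      fix j show "\<phi>2 (0, vd j) * \<phi>1 (0, \<lambda>z. \<phi>3 (T (\<rho> (T (v j)) z), 0))
         = (\<Sum>i<m. \<phi>1 (0, vd i) * \<phi>2 (0, vd j) * \<phi>3 (T (\<rho> (T (v j)) (v i)), 0))"
        unfolding R3 using K1[OF h1 lin_compr[OF lin_al[OF h3], of "T (v j)"]] by simp
    qed
    also have "\<dots> = (\<Sum>i<m. \<Sum>j<m. \<phi>1 (0, vd i) * \<phi>2 (0, vd j) * \<phi>3 (T (\<rho> (T (v j)) (v i)), 0))"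
      by (rule sum.swap)
    finally show ?thesis .
  qed
  have M4: "(\<Sum>i<m. \<Sum>j<m. \<phi>1 (0, \<lambda>z. vd i (l (T (v j)) z)) * \<phi>2 (T (v i), 0) * \<phi>3 (0, vd j))
     = (\<Sum>i<m. \<Sum>j<m. \<phi>1 (0, vd j) * \<phi>2 (T (l (T (v i)) (v j)), 0) * \<phi>3 (0, vd i))"
  proof -
    have "(\<Sum>i<m. \<Sum>j<m. \<phi>1 (0, \<lambda>z. vd i (l (T (v j)) z)) * \<phi>2 (T (v i), 0) * \<phi>3 (0, vd j))
       = (\<Sum>j<m. \<Sum>i<m. \<phi>1 (0, \<lambda>z. vd i (l (T (v j)) z)) * \<phi>2 (T (v i), 0) * \<phi>3 (0, vd j))"
      by (rule sum.swap)
    also have "\<dots> = (\<Sum>j<m. \<phi>3 (0, vd j) * \<phi>1 (0, \<lambda>z. \<phi>2 (T (l (T (v j)) z), 0)))"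
    proof (rule sum.cong[OF refl])
      fix j show "(\<Sum>i<m. \<phi>1 (0, \<lambda>z. vd i (l (T (v j)) z)) * \<phi>2 (T (v i), 0) * \<phi>3 (0, vd j))
         = \<phi>3 (0, vd j) * \<phi>1 (0, \<lambda>z. \<phi>2 (T (l (T (v j)) z), 0))"
        unfolding R4 using K3[OF h1 lin_al[OF h2] l_lin[of "T (v j)"]] by simp
    qed
    also have "\<dots> = (\<Sum>i<m. \<Sum>j<m. \<phi>1 (0, vd j) * \<phi>2 (T (l (T (v i)) (v j)), 0) * \<phi>3 (0, vd i))"
    proof (rule sum.cong[OF refl])
      fix i show "\<phi>3 (0, vd i) * \<phi>1 (0, \<lambda>z. \<phi>2 (T (l (T (v i)) z), 0))
         = (\<Sum>j<m. \<phi>1 (0, vd j) * \<phi>2 (T (l (T (v i)) (v j)), 0) * \<phi>3 (0, vd i))"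
        unfolding R4 using K1[OF h1 lin_compl[OF lin_al[OF h2], of "T (v i)"]] by simp
    qed
    finally show ?thesis .
  qed
  show "(\<Sum>(x, y, z)\<leftarrow>r12_r13 (\<lambda>x y. D_prec T l \<rho> x y + D_succ T l \<rho> x y)
              (concat (map (\<lambda>i. [((T (v i), 0), 0, vd i), ((0, vd i), T (v i), 0)]) [0..<m])).
        \<phi>1 x * \<phi>2 y * \<phi>3 z) =
       (\<Sum>(x, y, z)\<leftarrow>r13_r23 (D_prec T l \<rho>) (concat (map (\<lambda>i. [((T (v i), 0), 0, vd i), ((0, vd i), T (v i), 0)]) [0..<m])) @
                    r23_r12 (D_succ T l \<rho>) (concat (map (\<lambda>i. [((T (v i), 0), 0, vd i), ((0, vd i), T (v i), 0)]) [0..<m])).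
        \<phi>1 x * \<phi>2 y * \<phi>3 z)"
    unfolding r12_r13_def r13_r23_def r23_r12_def sum_list_append map_append LS2
    apply (simp only: LS1)
    using h1 h2 h3
    apply (simp add: eeP eeS efP efS feP feS ffP ffS dual_lin T_add[symmetric] al_add phi_0)
    apply (simp add: sum.distrib distrib_right M1 M2 M3 M4 add_ac)
    done
qed

end


lemma LS_flip: "sum_list (map (\<lambda>(x, y). F x y) (map (\<lambda>(x, y). (y, x)) (concat (map (\<lambda>i. [(a i, b i), (b i, a i)]) [0..<n]))))
  = sum_list (map (\<lambda>(x, y). F x y) (concat (map (\<lambda>i. [(a i, b i), (b i, a i)]) [0..<n])))"
  for F :: "'b \<Rightarrow> 'b \<Rightarrow> 'c::comm_monoid_add"
  by (induction n) (auto simp: add_ac)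

context DS begin
lemma symm: "tensor2_eq (D_scale sA) (D_carrier sV T) (flip2 R) R"
  if "R = concat (map (\<lambda>i. [((T (v i), 0), (0, vd i)), ((0, vd i), (T (v i), 0))]) [0..<m])"
  unfolding tensor2_eq_def flip2_def that
  by (intro allI impI, rule LS_flip)
end

theorem theorem4p4p13:
  fixes sA :: "'k::field \<Rightarrow> 'a::ab_group_add \<Rightarrow> 'a"
    and mult :: "'a \<Rightarrow> 'a \<Rightarrow> 'a"
    and sV :: "'k \<Rightarrow> 'v::ab_group_add \<Rightarrow> 'v"
    and l \<rho> :: "'a \<Rightarrow> 'v \<Rightarrow> 'v"
    and T :: "'v \<Rightarrow> 'a"
    and m :: nat
    and v :: "nat \<Rightarrow> 'v"
    and vd :: "nat \<Rightarrow> 'v \<Rightarrow> 'k"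
  assumes fdA: "fd_vector_space sA"
    and fdV: "fd_vector_space sV"
    and alg: "assoc_algebra sA mult"
    and bimod: "bimodule sA mult sV l \<rho>"
    and Oop: "O_operator sA mult sV l \<rho> T"
    and basis_inj: "inj_on v {..<m}"
    and basis_indep: "\<not> module.dependent sV (v ` {..<m})"
    and basis_span: "module.span sV (v ` {..<m}) = UNIV"
    and dual_lin: "\<And>i. i < m \<Longrightarrow> Vector_Spaces.linear sV ((*)) (vd i)"
    and dual_basis: "\<And>i j. i < m \<Longrightarrow> j < m \<Longrightarrow> vd i (v j) = (if i = j then 1 else 0)"
  shows "dendriform_algebra (D_scale sA) (D_carrier sV T) (D_prec T l \<rho>) (D_succ T l \<rho>)
    \<and> (let r = concat (map (\<lambda>i. [((T (v i), 0), (0, vd i)), ((0, vd i), (T (v i), 0))]) [0..<m])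
       in tensor2_eq (D_scale sA) (D_carrier sV T) (flip2 r) r
          \<and> D_equation (D_scale sA) (D_carrier sV T) (D_prec T l \<rho>) (D_succ T l \<rho>) r)"
proof -
  interpret DS sA mult sV l \<rho> T m v vd
    by (rule DS.intro[OF alg bimod Oop basis_inj basis_span dual_lin dual_basis])
  show ?thesis unfolding Let_def using dend Deq symm by blast
qed


end
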